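(* Let $\alpha\in(0,1)$, $p\in(0,1]$, $m=\lfloor\alpha n\rfloor$, let $B$ be an $n\times(n-m)$ matrix with i.i.d. $\mathcal N(0,1)$ entries, and let $\lambda>0$ be a constant. There exist constants $\rho^*>0$ and $c_{10}>0$ (depending on $\alpha,p,\lambda$) such that for all sufficiently large $n$, with probability at least $1-e^{-c_{10}n}$, for every $\mathbf z\in\mathcal S$ and every $T\subseteq\{1,\dots,n\}$ with $|T|\le\rho^*n$, $\|B_T\mathbf z\|_p^p<\tfrac12\lambda n$.
   Context: $\mathcal S$ is the unit Euclidean sphere in $\mathbb R^{n-m}$; $B_T$ is the submatrix of rows of $B$ indexed by $T$; $\|\mathbf v\|_p^p=\sum_i|v_i|^p$. *)

theory Defs
  imports "HOL-Probability.Probability"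
begin

(* Law of an n x k matrix with i.i.d. N(0,1) entries; entries B(i,j), i<n, j<k
   (0-based indices). *)
definition gauss_matrix :: "nat \<Rightarrow> nat \<Rightarrow> (nat \<times> nat \<Rightarrow> real) measure" where
  "gauss_matrix n k = PiM ({..<n} \<times> {..<k}) (\<lambda>_. density lborel std_normal_density)"

end

theory Submission
  imports Defs
begin

lemma std_mgf:
  "(\<integral>\<^sup>+ x. ennreal (exp (c * x)) \<partial>density lborel std_normal_density) = ennreal (exp (c^2/2))"
proof -
  have eq: "std_normal_density x * exp (c * x) = exp (c^2/2) * normal_density c 1 x" for x
  proof -
    have "exp (- x\<^sup>2 / 2) * exp (c * x) = exp (c^2/2) * exp (-(x - c)\<^sup>2 / 2)"
      by (simp add: mult_exp_exp power2_eq_square algebra_simps add_divide_distrib diff_divide_distrib)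
    then show ?thesis unfolding std_normal_density_def normal_density_def by simp
  qed
  have "(\<integral>\<^sup>+ x. ennreal (exp (c * x)) \<partial>density lborel std_normal_density)
      = (\<integral>\<^sup>+ x. ennreal (std_normal_density x) * ennreal (exp (c * x)) \<partial>lborel)"
    by (subst nn_integral_density) auto
  also have "\<dots> = (\<integral>\<^sup>+ x. ennreal (exp (c^2/2)) * ennreal (normal_density c 1 x) \<partial>lborel)"
    by (intro nn_integral_cong) (simp add: eq flip: ennreal_mult)
  also have "\<dots> = ennreal (exp (c^2/2)) * (\<integral>\<^sup>+ x. ennreal (normal_density c 1 x) \<partial>lborel)"
    by (rule nn_integral_cmult) auto
  also have "(\<integral>\<^sup>+ x. ennreal (normal_density c 1 x) \<partial>lborel) = 1"
    using integral_normal_density[of 1 c] integrable_normal_density[of 1 c]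
    by (subst nn_integral_eq_integral) auto
  finally show ?thesis by simp
qed

lemma prob_N: "prob_space (density lborel std_normal_density)"
  by (rule prob_space_normal_density) simp

lemma gm_prob: "prob_space (gauss_matrix n k)"
  unfolding gauss_matrix_def by (intro prob_space_PiM prob_N)

lemma gm_mgf:
  fixes a :: "nat \<times> nat \<Rightarrow> real"
  shows "(\<integral>\<^sup>+ B. ennreal (exp (\<Sum>ij\<in>{..<n}\<times>{..<k}. a ij * B ij)) \<partial>gauss_matrix n k)
     = ennreal (exp ((\<Sum>ij\<in>{..<n}\<times>{..<k}. (a ij)^2)/2))"
proof -
  let ?N = "density lborel std_normal_density"
  let ?I = "{..<n}\<times>{..<k}"
  interpret product_prob_space "\<lambda>_. ?N" ?I
    by (simp add: product_prob_space_def product_prob_space_axioms_def product_sigma_finite_def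
        prob_N prob_space_imp_sigma_finite)
  have "(\<integral>\<^sup>+ B. ennreal (exp (\<Sum>ij\<in>?I. a ij * B ij)) \<partial>gauss_matrix n k)
     = (\<integral>\<^sup>+ B. (\<Prod>ij\<in>?I. ennreal (exp (a ij * B ij))) \<partial>PiM ?I (\<lambda>_. ?N))"
    unfolding gauss_matrix_def
    by (intro nn_integral_cong) (simp add: exp_sum prod_ennreal)
  also have "\<dots> = (\<Prod>ij\<in>?I. (\<integral>\<^sup>+ x. ennreal (exp (a ij * x)) \<partial>?N))"
    by (rule product_nn_integral_prod) auto
  also have "\<dots> = (\<Prod>ij\<in>?I. ennreal (exp ((a ij)^2/2)))"
    by (simp add: std_mgf)
  also have "\<dots> = ennreal (exp ((\<Sum>ij\<in>?I. (a ij)^2)/2))"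
    by (simp add: prod_ennreal exp_sum sum_divide_distrib)
  finally show ?thesis .
qed

definition phi :: "(nat\<times>nat\<Rightarrow>real) \<Rightarrow> nat \<Rightarrow> nat set \<Rightarrow> real \<Rightarrow> (nat\<Rightarrow>real) \<Rightarrow> real" where
  "phi B k T p z = (\<Sum>i\<in>T. \<bar>\<Sum>j<k. B(i,j) * z j\<bar> powr p)"

definition sq :: "nat \<Rightarrow> (nat\<Rightarrow>real) \<Rightarrow> real" where
  "sq k z = (\<Sum>j<k. (z j)^2)"

definition qv :: "nat \<Rightarrow> rat list \<Rightarrow> nat \<Rightarrow> real" where
  "qv k xs = (\<lambda>j. if j < k then real_of_rat (xs ! j) else 0)"

lemma phi_hom: "0 < p \<Longrightarrow> phi B k T p (\<lambda>j. c * z j) = \<bar>c\<bar> powr p * phi B k T p z"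
proof -
  assume p: "0 < p"
  have "\<bar>\<Sum>j<k. B(i,j) * (c * z j)\<bar> powr p = \<bar>c\<bar> powr p * \<bar>\<Sum>j<k. B(i,j) * z j\<bar> powr p" for i
  proof -
    have "(\<Sum>j<k. B(i,j) * (c * z j)) = c * (\<Sum>j<k. B(i,j) * z j)"
      by (simp add: sum_distrib_left algebra_simps)
    then show ?thesis by (simp add: abs_mult powr_mult)
  qed
  then show ?thesis unfolding phi_def by (simp add: sum_distrib_left)
qed

lemma phi_cong: "(\<And>j. j < k \<Longrightarrow> z j = w j) \<Longrightarrow> phi B k T p z = phi B k T p w"
  unfolding phi_def by (intro sum.cong refl arg_cong2[where f="(powr)"] arg_cong[where f=abs]) auto

lemma sq_cong: "(\<And>j. j < k \<Longrightarrow> z j = w j) \<Longrightarrow> sq k z = sq k w"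
  unfolding sq_def by (intro sum.cong) auto

lemma phi_cont: "0 < p \<Longrightarrow> continuous_on UNIV (phi B k T p)"
  unfolding phi_def
  by (intro continuous_intros continuous_on_powr') (auto intro: continuous_on_product_then_coordinatewise continuous_on_id)

lemma Z0_compact: "compact {z::nat\<Rightarrow>real. sq k z = 1 \<and> (\<forall>j\<ge>k. z j = 0)}"
proof -
  define S where "S = (\<lambda>j::nat. if j < k then {-1..1::real} else {0})"
  have c: "compact (PiE UNIV S)"
    using compactin_PiE[of "\<lambda>_. euclidean::real topology" UNIV S]
    unfolding euclidean_product_topology S_def by auto
  have cl: "closed {z::nat\<Rightarrow>real. sq k z = 1 \<and> (\<forall>j\<ge>k. z j = 0)}"
    unfolding sq_def
    by (intro closed_Collect_conj closed_Collect_eq closed_Collect_all closed_Collect_imp)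
       (auto intro!: continuous_intros intro: continuous_on_product_then_coordinatewise continuous_on_id)
  have sub: "{z::nat\<Rightarrow>real. sq k z = 1 \<and> (\<forall>j\<ge>k. z j = 0)} \<subseteq> PiE UNIV S"
  proof
    fix z :: "nat\<Rightarrow>real" assume z: "z \<in> {z. sq k z = 1 \<and> (\<forall>j\<ge>k. z j = 0)}"
    have "\<bar>z j\<bar> \<le> 1" if "j < k" for j
    proof -
      have "(z j)^2 \<le> sq k z" unfolding sq_def
        using that by (intro member_le_sum) auto
      then have "(z j)^2 \<le> 1^2" using z by simp
      then show ?thesis using abs_le_square_iff[of "z j" 1] by simp
    qed
    then show "z \<in> PiE UNIV S" using z by (auto simp: S_def PiE_def Pi_def abs_le_iff)
  qed
  show ?thesis using compact_Int_closed[OF c cl] sub by (simp add: Int_absorb1)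
qed


lemma phi_zero: "(\<And>j. j < k \<Longrightarrow> z j = 0) \<Longrightarrow> 0 < p \<Longrightarrow> phi B k T p z = 0"
proof -
  assume "\<And>j. j < k \<Longrightarrow> z j = 0" "0 < p"
  then have "phi B k T p z = phi B k T p (\<lambda>_. 0)" by (intro phi_cong) auto
  also have "\<dots> = 0" unfolding phi_def by simp
  finally show ?thesis .
qed

lemma dir_a:
  assumes p: "0 < p" and k: "1 \<le> k" and H: "\<forall>z. sq k z = 1 \<longrightarrow> phi B k T p z < L"
  shows "\<exists>m::nat. \<forall>q. phi B k T p q \<le> (L - inverse (real (Suc m))) * sq k q powr (p/2)"
proof -
  define Z0 where "Z0 = {z::nat\<Rightarrow>real. sq k z = 1 \<and> (\<forall>j\<ge>k. z j = 0)}"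
  have e0: "(\<lambda>j. if j = 0 then 1 else 0::real) \<in> Z0"
  proof -
    have "sq k (\<lambda>j. if j = 0 then 1 else 0::real) = (\<Sum>j<k. if j = 0 then 1 else 0)"
      unfolding sq_def by (intro sum.cong) auto
    also have "\<dots> = 1" using k by simp
    finally show ?thesis using k unfolding Z0_def by auto
  qed
  have cont: "continuous_on Z0 (phi B k T p)"
    by (rule continuous_on_subset[OF phi_cont[OF p]]) simp
  have cpt: "compact Z0" unfolding Z0_def by (rule Z0_compact)
  have ne: "Z0 \<noteq> {}" using e0 by blast
  obtain zs where zs: "zs \<in> Z0" and zmax: "\<And>w. w \<in> Z0 \<Longrightarrow> phi B k T p w \<le> phi B k T p zs"
    using continuous_attains_sup[OF cpt ne cont] by blast
  have "phi B k T p zs < L" using H zs unfolding Z0_def by auto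
  then obtain m where m: "inverse (real (Suc m)) < L - phi B k T p zs"
    using reals_Archimedean[of "L - phi B k T p zs"] by auto
  have "phi B k T p q \<le> (L - inverse (real (Suc m))) * sq k q powr (p/2)" for q
  proof (cases "sq k q = 0")
    case True
    then have "q j = 0" if "j < k" for j
      using that unfolding sq_def by (subst (asm) sum_nonneg_eq_0_iff) auto
    then show ?thesis using True phi_zero[of k q p B T] p by simp
  next
    case False
    define s where "s = sq k q"
    have "s \<ge> 0" unfolding s_def sq_def by (intro sum_nonneg) auto
    then have s: "s > 0" using False unfolding s_def by simp
    define w where "w = (\<lambda>j. if j < k then q j / sqrt s else 0)"
    have "sq k w = (\<Sum>j<k. (q j)^2 / s)"
      unfolding sq_def w_def by (intro sum.cong) (auto simp: power_divide s less_imp_le)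
    also have "\<dots> = 1" using s unfolding s_def sq_def by (simp add: sum_divide_distrib[symmetric])
    finally have wZ: "w \<in> Z0" unfolding Z0_def w_def by auto
    have "phi B k T p q = phi B k T p (\<lambda>j. sqrt s * w j)"
      by (intro phi_cong) (use s in \<open>auto simp: w_def\<close>)
    also have "\<dots> = sqrt s powr p * phi B k T p w" using phi_hom[OF p, of B k T "sqrt s" w] s by simp
    also have "sqrt s powr p = s powr (p/2)"
      using s by (simp add: powr_half_sqrt[symmetric] powr_powr)
    also have "s powr (p/2) * phi B k T p w \<le> s powr (p/2) * (L - inverse (real (Suc m)))"
      using zmax[OF wZ] m by (intro mult_left_mono) auto
    finally show ?thesis unfolding s_def by (simp add: mult.commute)
  qed
  then show ?thesis by blast
qed


lemma dir_b:
  assumes p: "0 < p" and H: "\<forall>xs. phi B k T p (qv k xs) \<le> c * sq k (qv k xs) powr (p/2)"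
    and z: "sq k z = 1"
  shows "phi B k T p z \<le> c"
proof -
  define e where "e = (\<lambda>N::nat. inverse (real (Suc N)))"
  have epos: "e N > 0" for N unfolding e_def by simp
  define r where "r = (\<lambda>N j. SOME q::rat. z j - e N < of_rat q \<and> of_rat q < z j + e N)"
  have r: "z j - e N < of_rat (r N j) \<and> of_rat (r N j) < z j + e N" for N j
    unfolding r_def by (rule someI_ex) (rule of_rat_dense, use epos[of N] in simp)
  define xs where "xs = (\<lambda>N. map (r N) [0..<k])"
  have qvj: "qv k (xs N) j = of_rat (r N j)" if "j < k" for N j
    using that unfolding qv_def xs_def by simp
  have e0: "e \<longlonglongrightarrow> 0" unfolding e_def by (rule LIMSEQ_inverse_real_of_nat)
  have conv: "(\<lambda>N. qv k (xs N) j) \<longlonglongrightarrow> z j" if "j < k" for j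
  proof (rule tendsto_sandwich[of "\<lambda>N. z j - e N" _ _ "\<lambda>N. z j + e N"])
    show "\<forall>\<^sub>F N in sequentially. z j - e N \<le> qv k (xs N) j"
      using r qvj[OF that] by (auto intro!: always_eventually less_imp_le)
    show "\<forall>\<^sub>F N in sequentially. qv k (xs N) j \<le> z j + e N"
      using r qvj[OF that] by (auto intro!: always_eventually less_imp_le)
    show "(\<lambda>N. z j - e N) \<longlonglongrightarrow> z j" using tendsto_diff[OF tendsto_const e0] by simp
    show "(\<lambda>N. z j + e N) \<longlonglongrightarrow> z j" using tendsto_add[OF tendsto_const e0] by simp
  qed
  have L1: "(\<lambda>N. phi B k T p (qv k (xs N))) \<longlonglongrightarrow> phi B k T p z"
    unfolding phi_def using p
    by (intro tendsto_intros conv) auto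
  have "(\<lambda>N. sq k (qv k (xs N))) \<longlonglongrightarrow> sq k z"
    unfolding sq_def by (intro tendsto_intros conv) auto
  then have L2: "(\<lambda>N. c * sq k (qv k (xs N)) powr (p/2)) \<longlonglongrightarrow> c * 1"
    using z tendsto_powr[of "\<lambda>N. sq k (qv k (xs N))" 1 sequentially "\<lambda>_. p/2" "p/2"]
    by (intro tendsto_intros) auto
  show ?thesis
    using tendsto_le[OF trivial_limit_sequentially L2 L1] H by simp
qed


lemma gm_comp: "i < n \<Longrightarrow> j < k \<Longrightarrow> (\<lambda>B. B (i,j)) \<in> borel_measurable (gauss_matrix n k)"
proof -
  assume ij: "i < n" "j < k"
  have "(\<lambda>B. B (i,j)) \<in> measurable (gauss_matrix n k) (density lborel std_normal_density)"
    unfolding gauss_matrix_def by (rule measurable_component_singleton) (use ij in auto)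
  moreover have "sets (density lborel std_normal_density) = sets borel" by simp
  ultimately show ?thesis using measurable_cong_sets[OF refl, of "density lborel std_normal_density" borel "gauss_matrix n k"]
    by simp
qed

lemma phi_meas:
  assumes "T \<subseteq> {..<n}"
  shows "(\<lambda>B. phi B k T p q) \<in> borel_measurable (gauss_matrix n k)"
  unfolding phi_def
proof (intro borel_measurable_sum)
  fix i assume "i \<in> T"
  then have i: "i < n" using assms by auto
  have "(\<lambda>B. \<Sum>j<k. B(i,j) * q j) \<in> borel_measurable (gauss_matrix n k)"
    by (intro borel_measurable_sum borel_measurable_times gm_comp i borel_measurable_const) auto
  then show "(\<lambda>B. \<bar>\<Sum>j<k. B(i,j) * q j\<bar> powr p) \<in> borel_measurable (gauss_matrix n k)"
    by measurable
qed

lemma good_meas: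
  assumes p: "0 < p" and k: "1 \<le> k" and T: "T \<subseteq> {..<n}"
  shows "{B \<in> space (gauss_matrix n k). \<forall>z. sq k z = 1 \<longrightarrow> phi B k T p z < L} \<in> sets (gauss_matrix n k)"
proof -
  have eq: "{B \<in> space (gauss_matrix n k). \<forall>z. sq k z = 1 \<longrightarrow> phi B k T p z < L}
    = {B \<in> space (gauss_matrix n k). \<exists>m::nat. \<forall>xs::rat list.
        phi B k T p (qv k xs) \<le> (L - inverse (real (Suc m))) * sq k (qv k xs) powr (p/2)}"
  proof (intro Collect_cong conj_cong refl iffI)
    fix B assume "\<forall>z. sq k z = 1 \<longrightarrow> phi B k T p z < L"
    then show "\<exists>m::nat. \<forall>xs::rat list.
        phi B k T p (qv k xs) \<le> (L - inverse (real (Suc m))) * sq k (qv k xs) powr (p/2)"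
      using dir_a[OF p k] by blast
  next
    fix B assume "\<exists>m::nat. \<forall>xs::rat list.
        phi B k T p (qv k xs) \<le> (L - inverse (real (Suc m))) * sq k (qv k xs) powr (p/2)"
    then obtain m where m: "\<forall>xs::rat list.
        phi B k T p (qv k xs) \<le> (L - inverse (real (Suc m))) * sq k (qv k xs) powr (p/2)" by blast
    show "\<forall>z. sq k z = 1 \<longrightarrow> phi B k T p z < L"
    proof (intro allI impI)
      fix z assume "sq k z = 1"
      from dir_b[OF p m this] show "phi B k T p z < L"
        by (smt (verit) inverse_positive_iff_positive of_nat_0_less_iff zero_less_Suc)
    qed
  qed
  have [measurable]: "(\<lambda>B. phi B k T p q) \<in> borel_measurable (gauss_matrix n k)" for q
    by (rule phi_meas[OF T])
  show ?thesis unfolding eq by measurable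
qed

definition netI :: "nat \<Rightarrow> (nat \<Rightarrow> int) set" where
  "netI d = {x \<in> PiE {..<d} (\<lambda>_. {-int (36*d)..int (36*d)}). (\<Sum>j<d. (real_of_int (x j))^2) \<le> 36 * real d}"

definition net :: "nat \<Rightarrow> (nat \<Rightarrow> real) set" where
  "net d = (\<lambda>x j. if j < d then real_of_int (x j) / (3 * sqrt d) else 0) ` netI d"

lemma finite_netI: "finite (netI d)"
proof (rule finite_subset)
  show "netI d \<subseteq> PiE {..<d} (\<lambda>_. {-int (36*d)..int (36*d)})" unfolding netI_def by blast
  show "finite (PiE {..<d} (\<lambda>_. {-int (36*d)..int (36*d)}))" by (intro finite_PiE) auto
qed

lemma finite_net: "finite (net d)"
  unfolding net_def using finite_netI by simp

lemma geo_sum: "(\<Sum>a\<in>{-int M..int M}. (1/2::real)^(nat \<bar>a\<bar>)) \<le> 3 - 2*(1/2)^M"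
proof (induction M)
  case 0 then show ?case by simp
next
  case (Suc M)
  have eq: "{-int (Suc M)..int (Suc M)} = insert (int (Suc M)) (insert (- int (Suc M)) {-int M..int M})"
    by auto
  have "(\<Sum>a\<in>{-int (Suc M)..int (Suc M)}. (1/2::real)^(nat \<bar>a\<bar>))
      = (1/2)^(Suc M) + (1/2)^(Suc M) + (\<Sum>a\<in>{-int M..int M}. (1/2::real)^(nat \<bar>a\<bar>))"
  proof -
    have n1: "int (Suc M) \<notin> insert (- int (Suc M)) {-int M..int M}" by auto
    have n2: "- int (Suc M) \<notin> {-int M..int M}" by auto
    have h: "nat (1 + int M) = Suc M" "nat (int M + 1) = Suc M" by auto
    show ?thesis unfolding eq sum.insert[OF finite_insert[THEN iffD2, OF finite_atLeastAtMost_int] n1]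
      sum.insert[OF finite_atLeastAtMost_int n2] by (simp add: h)
  qed
  with Suc show ?case by simp
qed

lemma exp_le_half: "exp (- ((real_of_int a)\<^sup>2)) \<le> (1/2::real)^(nat \<bar>a\<bar>)"
proof -
  have ia: "\<bar>a\<bar> \<le> \<bar>a\<bar> * \<bar>a\<bar>"
  proof (cases "a = 0")
    case False
    then have "\<bar>a\<bar> * 1 \<le> \<bar>a\<bar> * \<bar>a\<bar>" by (intro mult_left_mono) auto
    then show ?thesis by simp
  qed simp
  have "\<bar>real_of_int a\<bar> \<le> (real_of_int a)^2"
  proof -
    have "real_of_int \<bar>a\<bar> \<le> real_of_int (\<bar>a\<bar> * \<bar>a\<bar>)" using ia by (simp only: of_int_le_iff)
    then show ?thesis by (simp add: power2_eq_square)
  qed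
  then have "exp (- ((real_of_int a)\<^sup>2)) \<le> exp (- \<bar>real_of_int a\<bar>)" by simp
  also have "- \<bar>real_of_int a\<bar> = real (nat \<bar>a\<bar>) * (-1)" by simp
  also have "exp \<dots> = exp (-1) ^ (nat \<bar>a\<bar>)" by (rule exp_of_nat_mult)
  also have "\<dots> \<le> (1/2) ^ (nat \<bar>a\<bar>)"
  proof (rule power_mono)
    have "2 \<le> exp (1::real)" using exp_ge_add_one_self[of 1] by simp
    then show "exp (-1) \<le> (1/2::real)" by (simp add: exp_minus field_simps)
  qed simp
  finally show ?thesis .
qed

lemma card_netI: "real (card (netI d)) \<le> exp (36 * real d) * 4 ^ d"
proof -
  define P where "P = PiE {..<d} (\<lambda>_. {-int (36*d)..int (36*d)})"
  define f where "f = (\<lambda>x::nat\<Rightarrow>int. exp (36 * real d - (\<Sum>j<d. (real_of_int (x j))^2)))"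
  have fin: "finite P" unfolding P_def by (rule finite_PiE) auto
  have sub: "netI d \<subseteq> P" unfolding netI_def P_def by auto
  have "real (card (netI d)) = (\<Sum>x\<in>netI d. 1)" by simp
  also have "\<dots> \<le> (\<Sum>x\<in>netI d. f x)"
    by (intro sum_mono) (auto simp: f_def netI_def)
  also have "\<dots> \<le> (\<Sum>x\<in>P. f x)"
    by (intro sum_mono2 fin sub) (auto simp: f_def)
  also have "\<dots> = exp (36 * real d) * (\<Sum>x\<in>P. \<Prod>j<d. exp (- ((real_of_int (x j))\<^sup>2)))"
    unfolding f_def by (simp add: sum_distrib_left exp_diff exp_sum[symmetric] sum_negf divide_inverse exp_minus[symmetric])
  also have "(\<Sum>x\<in>P. \<Prod>j<d. exp (- ((real_of_int (x j))\<^sup>2)))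
      = (\<Prod>j<d. \<Sum>a\<in>{-int (36*d)..int (36*d)}. exp (- ((real_of_int a)\<^sup>2)))"
    unfolding P_def by (rule prod_sum_PiE[symmetric]) auto
  also have "\<dots> \<le> (\<Prod>j<d. (4::real))"
  proof (intro prod_mono conjI)
    fix j
    show "0 \<le> (\<Sum>a\<in>{-int (36*d)..int (36*d)}. exp (- ((real_of_int a)\<^sup>2)))"
      by (intro sum_nonneg) auto
    have "(\<Sum>a\<in>{-int (36*d)..int (36*d)}. exp (- ((real_of_int a)\<^sup>2)))
       \<le> (\<Sum>a\<in>{-int (36*d)..int (36*d)}. (1/2::real)^(nat \<bar>a\<bar>))"
      by (intro sum_mono exp_le_half)
    also have "\<dots> \<le> 3 - 2*(1/2)^(36*d)" by (rule geo_sum)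
    also have "\<dots> \<le> 4" using zero_le_power[of "1/2::real" "36*d"] by linarith
    finally show "(\<Sum>a\<in>{-int (36*d)..int (36*d)}. exp (- ((real_of_int a)\<^sup>2))) \<le> 4" .
  qed
  finally show ?thesis by simp
qed

lemma card_net: "real (card (net d)) \<le> exp (38 * real d)"
proof -
  have "real (card (net d)) \<le> real (card (netI d))"
    unfolding net_def by (simp add: card_image_le finite_netI)
  also have "\<dots> \<le> exp (36 * real d) * 4 ^ d" by (rule card_netI)
  also have "(4::real) ^ d \<le> exp 2 ^ d"
  proof (rule power_mono)
    have "(2::real)^2 \<le> exp 1 ^ 2" using exp_ge_add_one_self[of 1] by (intro power_mono) auto
    then show "(4::real) \<le> exp 2" by (simp add: exp_of_nat_mult[of 2 1, symmetric])
  qed simp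
  also have "exp (36 * real d) * exp 2 ^ d = exp (38 * real d)"
    by (simp add: exp_of_nat_mult[symmetric] exp_add[symmetric] algebra_simps)
  finally show ?thesis by simp
qed


lemma int_abs_le_sq: "\<bar>a::int\<bar> \<le> a^2"
proof (cases "a = 0")
  case False
  then have "\<bar>a\<bar> * 1 \<le> \<bar>a\<bar> * \<bar>a\<bar>" by (intro mult_left_mono) auto
  then show ?thesis by (simp add: power2_eq_square)
qed simp

lemma net_sq: assumes "1 \<le> d" "w \<in> net d" shows "sq d w \<le> 4"
proof -
  obtain x where x: "x \<in> netI d" and w: "w = (\<lambda>j. if j < d then real_of_int (x j) / (3 * sqrt d) else 0)"
    using assms(2) unfolding net_def by auto
  have d: "real d > 0" using assms(1) by simp
  have "sq d w = (\<Sum>j<d. (real_of_int (x j))^2) / (9 * real d)"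
    unfolding sq_def w sum_divide_distrib by (intro sum.cong) (use d in \<open>auto simp: power_divide power_mult_distrib\<close>)
  also have "\<dots> \<le> (36 * real d) / (9 * real d)"
    using x d unfolding netI_def by (intro divide_right_mono) auto
  also have "\<dots> = 4" using d by simp
  finally show ?thesis .
qed

lemma net_approx:
  assumes d1: "1 \<le> d" and z: "sq d z \<le> 1"
  shows "\<exists>w\<in>net d. sq d (\<lambda>j. z j - w j) \<le> 1/36"
proof -
  define h where "h = 3 * sqrt (real d)"
  have d: "real d > 0" using d1 by simp
  have h: "h > 0" unfolding h_def using d by simp
  have h2: "h^2 = 9 * real d" unfolding h_def using d by (simp add: power_mult_distrib)
  define x where "x = restrict (\<lambda>j. round (h * z j)) {..<d}"
  define w where "w = (\<lambda>j. if j < d then real_of_int (x j) / (3 * sqrt d) else 0)"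
  have wj: "w j = real_of_int (round (h * z j)) / h" if "j < d" for j
    using that unfolding w_def x_def h_def by simp
  have e: "(z j - w j)^2 \<le> 1 / (36 * real d)" if "j < d" for j
  proof -
    have "\<bar>real_of_int (round (h * z j)) - h * z j\<bar> \<le> 1/2" by (rule of_int_round_abs_le)
    moreover have "(z j - w j) * h = h * z j - real_of_int (round (h * z j))"
      using h wj[OF that] by (simp add: field_simps)
    moreover have "\<bar>(z j - w j) * h\<bar> = \<bar>z j - w j\<bar> * h" using h by (simp add: abs_mult)
    ultimately have "\<bar>z j - w j\<bar> * h \<le> 1/2"
      by (metis abs_minus_commute)
    then have "\<bar>z j - w j\<bar> \<le> 1 / (2*h)" using h by (simp add: field_simps)
    then have "\<bar>z j - w j\<bar>^2 \<le> (1/(2*h))^2" by (intro power_mono) auto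
    also have "(1/(2*h))^2 = 1 / (4 * h^2)" by (simp add: power_divide power_mult_distrib)
    finally show ?thesis using h2 by simp
  qed
  have S: "sq d (\<lambda>j. z j - w j) \<le> 1/36"
  proof -
    have "sq d (\<lambda>j. z j - w j) \<le> (\<Sum>j<d. 1 / (36 * real d))"
      unfolding sq_def by (intro sum_mono e) auto
    also have "\<dots> = 1/36" using d by simp
    finally show ?thesis .
  qed
  have sw: "sq d w \<le> 4"
  proof -
    have "(w j)^2 \<le> 2 * (z j)^2 + 2 * (z j - w j)^2" for j
      by (smt (verit) power2_diff power2_sum sum_squares_ge_zero zero_le_power2 power2_eq_square mult_2 mult.commute)
    then have "sq d w \<le> (\<Sum>j<d. 2 * (z j)^2 + 2 * (z j - w j)^2)"
      unfolding sq_def by (intro sum_mono) auto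
    also have "\<dots> = 2 * sq d z + 2 * sq d (\<lambda>j. z j - w j)"
      unfolding sq_def by (simp add: sum.distrib sum_distrib_left)
    finally show ?thesis using z S by simp
  qed
  have xs: "(\<Sum>j<d. (real_of_int (x j))^2) \<le> 36 * real d"
  proof -
    have "(\<Sum>j<d. (real_of_int (x j))^2) = (\<Sum>j<d. h^2 * (w j)^2)"
      by (intro sum.cong) (use h in \<open>auto simp: w_def x_def h_def power_divide\<close>)
    also have "\<dots> = h^2 * sq d w" unfolding sq_def by (simp add: sum_distrib_left)
    also have "\<dots> \<le> h^2 * 4" using sw by (intro mult_left_mono) auto
    finally show ?thesis using h2 by simp
  qed
  have xI: "x \<in> netI d"
  proof -
    have "\<bar>x j\<bar> \<le> int (36 * d)" if "j < d" for j
    proof -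
      have "(real_of_int (x j))^2 \<le> (\<Sum>j<d. (real_of_int (x j))^2)"
        using that by (intro member_le_sum) auto
      then have "real_of_int ((x j)^2) \<le> real_of_int (int (36 * d))" using xs by simp
      then have "(x j)^2 \<le> int (36 * d)" by (simp only: of_int_le_iff)
      then show ?thesis using int_abs_le_sq[of "x j"] by linarith
    qed
    note B = this
    have "x j \<in> {-int (36*d)..int (36*d)}" if "j < d" for j
      using abs_le_D1[OF B[OF that]] abs_le_D2[OF B[OF that]] unfolding atLeastAtMost_iff by linarith
    then show ?thesis using xs unfolding netI_def by (auto simp: x_def PiE_def Pi_def)
  qed
  have "w \<in> net d" unfolding net_def w_def using xI by blast
  with S show ?thesis by blast
qed

definition bil :: "nat \<Rightarrow> nat \<Rightarrow> (nat\<times>nat\<Rightarrow>real) \<Rightarrow> (nat\<Rightarrow>real) \<Rightarrow> (nat\<Rightarrow>real) \<Rightarrow> real" where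
  "bil n k B u z = (\<Sum>i<n. \<Sum>j<k. u i * B(i,j) * z j)"

lemma bil_scale: "bil n k B (\<lambda>i. a * u i) (\<lambda>j. b * z j) = a * b * bil n k B u z"
  unfolding bil_def by (simp add: sum_distrib_left algebra_simps)

lemma bil_split: "bil n k B u z = bil n k B u' z' + bil n k B (\<lambda>i. u i - u' i) z + bil n k B u' (\<lambda>j. z j - z' j)"
  unfolding bil_def by (simp add: sum.distrib[symmetric] algebra_simps)

lemma sq_coord: "j < k \<Longrightarrow> (z j)^2 \<le> sq k z"
  unfolding sq_def by (intro member_le_sum) auto

lemma abs_coord: "j < k \<Longrightarrow> sq k z \<le> 1 \<Longrightarrow> \<bar>z j\<bar> \<le> 1"
  using sq_coord[of j k z] abs_le_square_iff[of "z j" 1] by simp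

lemma sq_scale: "sq k (\<lambda>j. c * z j) = c^2 * sq k z"
  unfolding sq_def by (simp add: sum_distrib_left power_mult_distrib)

lemma op_bound:
  assumes n: "1 \<le> n" and k: "1 \<le> k"
    and H: "\<forall>u\<in>net n. \<forall>z\<in>net k. bil n k B u z \<le> K"
    and u: "sq n u \<le> 1" and z: "sq k z \<le> 1"
  shows "bil n k B u z \<le> 2 * K"
proof -
  define P where "P = {bil n k B u z | u z. sq n u \<le> 1 \<and> sq k z \<le> 1}"
  define F where "F = (\<Sum>i<n. \<Sum>j<k. \<bar>B(i,j)\<bar>)"
  have bd: "bil n k B u z \<le> F" if "sq n u \<le> 1" "sq k z \<le> 1" for u z
  proof -
    have "bil n k B u z \<le> (\<Sum>i<n. \<Sum>j<k. \<bar>u i * B(i,j) * z j\<bar>)"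
      unfolding bil_def by (intro sum_mono) auto
    also have "\<dots> \<le> F" unfolding F_def
    proof (intro sum_mono)
      fix i j assume "i \<in> {..<n}" "j \<in> {..<k}"
      then have "\<bar>u i\<bar> \<le> 1" "\<bar>z j\<bar> \<le> 1" using abs_coord that by auto
      then have "\<bar>u i\<bar> * \<bar>B(i,j)\<bar> * \<bar>z j\<bar> \<le> 1 * \<bar>B(i,j)\<bar> * 1"
        by (intro mult_mono) auto
      then show "\<bar>u i * B(i,j) * z j\<bar> \<le> \<bar>B(i,j)\<bar>" by (simp add: abs_mult)
    qed
    finally show ?thesis .
  qed
  have bdd: "bdd_above P" unfolding P_def bdd_above_def using bd by blast
  have ne: "P \<noteq> {}" unfolding P_def
  proof -
    have "bil n k B (\<lambda>_. 0) (\<lambda>_. 0) \<in> {bil n k B u z | u z. sq n u \<le> 1 \<and> sq k z \<le> 1}"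
      by (intro CollectI exI[of _ "\<lambda>_. 0"] conjI) (auto simp: sq_def)
    then show "{bil n k B u z | u z. sq n u \<le> 1 \<and> sq k z \<le> 1} \<noteq> {}" by blast
  qed
  define S where "S = Sup P"
  have upper: "bil n k B u z \<le> S" if "sq n u \<le> 1" "sq k z \<le> 1" for u z
    unfolding S_def P_def using that bdd unfolding P_def by (intro cSup_upper) auto
  have scale: "bil n k B v y \<le> a * b * S" if "a > 0" "b > 0" "sq n v \<le> a^2" "sq k y \<le> b^2" for v y a b
  proof -
    have "sq n (\<lambda>i. (1/a) * v i) \<le> 1"
    proof -
      have "sq n (\<lambda>i. (1/a) * v i) = (1/a)^2 * sq n v" by (rule sq_scale)
      also have "\<dots> \<le> (1/a)^2 * a^2" using that by (intro mult_left_mono) auto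
      also have "\<dots> = 1" using that by (simp add: power_divide)
      finally show ?thesis .
    qed
    moreover have "sq k (\<lambda>j. (1/b) * y j) \<le> 1"
    proof -
      have "sq k (\<lambda>j. (1/b) * y j) = (1/b)^2 * sq k y" by (rule sq_scale)
      also have "\<dots> \<le> (1/b)^2 * b^2" using that by (intro mult_left_mono) auto
      also have "\<dots> = 1" using that by (simp add: power_divide)
      finally show ?thesis .
    qed
    ultimately have "bil n k B (\<lambda>i. (1/a) * v i) (\<lambda>j. (1/b) * y j) \<le> S" by (rule upper)
    then have "(1/a) * (1/b) * bil n k B v y \<le> S" by (simp only: bil_scale)
    then show ?thesis using that by (simp add: field_simps)
  qed
  have main: "bil n k B u z \<le> K + S/2" if hu: "sq n u \<le> 1" and hz: "sq k z \<le> 1" for u z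
  proof -
    obtain u' where u': "u' \<in> net n" "sq n (\<lambda>j. u j - u' j) \<le> 1/36"
      using net_approx[OF n hu] by blast
    obtain z' where z': "z' \<in> net k" "sq k (\<lambda>j. z j - z' j) \<le> 1/36"
      using net_approx[OF k hz] by blast
    have "bil n k B u z = bil n k B u' z' + bil n k B (\<lambda>i. u i - u' i) z + bil n k B u' (\<lambda>j. z j - z' j)"
      by (rule bil_split)
    also have "\<dots> \<le> K + (1/6) * 1 * S + 2 * (1/6) * S"
    proof (intro add_mono)
      show "bil n k B u' z' \<le> K" using H u' z' by blast
      show "bil n k B (\<lambda>i. u i - u' i) z \<le> (1/6) * 1 * S"
        by (rule scale) (use u' hz in \<open>auto simp: power2_eq_square\<close>)
      show "bil n k B u' (\<lambda>j. z j - z' j) \<le> 2 * (1/6) * S"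
        by (rule scale) (use z' net_sq[OF n u'(1)] in \<open>auto simp: power2_eq_square\<close>)
    qed
    finally show ?thesis by simp
  qed
  have "S \<le> K + S/2" unfolding S_def
    by (rule cSup_least[OF ne]) (use main in \<open>auto simp: P_def S_def\<close>)
  then show ?thesis using upper[OF u z] by simp
qed

lemma row_bound:
  assumes B2: "\<forall>u z. sq n u \<le> 1 \<longrightarrow> sq k z \<le> 1 \<longrightarrow> bil n k B u z \<le> C"
    and z: "sq k z \<le> 1"
  shows "(\<Sum>i<n. (\<Sum>j<k. B(i,j) * z j)^2) \<le> C^2"
proof -
  define y where "y = (\<lambda>i. \<Sum>j<k. B(i,j) * z j)"
  define Y where "Y = (\<Sum>i<n. (y i)^2)"
  have Y0: "Y \<ge> 0" unfolding Y_def by (intro sum_nonneg) auto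
  have bily: "bil n k B u z = (\<Sum>i<n. u i * y i)" for u
    unfolding bil_def y_def by (simp add: sum_distrib_left mult.assoc)
  show ?thesis
  proof (cases "Y = 0")
    case True
    then show ?thesis unfolding Y_def y_def by simp
  next
    case False
    then have Yp: "Y > 0" using Y0 by simp
    define u where "u = (\<lambda>i. (1 / sqrt Y) * y i)"
    have "sq n u = (1/sqrt Y)^2 * Y" unfolding u_def sq_scale by (simp add: sq_def Y_def)
    also have "\<dots> = 1" using Yp by (simp add: power_divide)
    finally have "bil n k B u z \<le> C" using B2 z by simp
    moreover have "bil n k B u z = Y / sqrt Y"
      unfolding bily u_def Y_def by (simp add: sum_divide_distrib power2_eq_square mult.assoc)
    moreover have "Y / sqrt Y = sqrt Y" using Yp by (simp add: real_div_sqrt)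
    ultimately have "sqrt Y \<le> C" by simp
    then have "(sqrt Y)^2 \<le> C^2" using Y0 by (intro power_mono) auto
    then have "Y \<le> C^2" using Y0 by simp
    then show ?thesis unfolding Y_def y_def by simp
  qed
qed

lemma bil_meas: "(\<lambda>B. bil n k B u z) \<in> borel_measurable (gauss_matrix n k)"
  unfolding bil_def
  by (intro borel_measurable_sum borel_measurable_times gm_comp borel_measurable_const) auto

lemma bil_prod: "bil n k B u z = (\<Sum>ij\<in>{..<n}\<times>{..<k}. (u (fst ij) * z (snd ij)) * B ij)"
  unfolding bil_def sum.cartesian_product by (intro sum.cong) (auto simp: split_beta)

lemma chernoff:
  assumes t: "t > 0"
  shows "measure (gauss_matrix n k) {B \<in> space (gauss_matrix n k). K \<le> bil n k B u z}
      \<le> exp (t^2 * sq n u * sq k z / 2 - t * K)"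
proof -
  let ?M = "gauss_matrix n k"
  let ?I = "{..<n}\<times>{..<k}"
  interpret prob_space ?M by (rule gm_prob)
  define a where "a = (\<lambda>ij::nat\<times>nat. t * (u (fst ij) * z (snd ij)))"
  have X: "t * bil n k B u z = (\<Sum>ij\<in>?I. a ij * B ij)" for B
    unfolding bil_prod a_def by (simp add: sum_distrib_left mult.assoc)
  have sa: "(\<Sum>ij\<in>?I. (a ij)^2) = t^2 * sq n u * sq k z"
  proof -
    have "(\<Sum>ij\<in>?I. (a ij)^2) = (\<Sum>i<n. \<Sum>j<k. t^2 * ((u i)^2 * (z j)^2))"
      unfolding a_def sum.cartesian_product by (intro sum.cong) (auto simp: split_beta power_mult_distrib)
    also have "\<dots> = (\<Sum>i<n. t^2 * (u i)^2 * sq k z)"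
    proof (rule sum.cong)
      fix i show "(\<Sum>j<k. t^2 * ((u i)^2 * (z j)^2)) = t^2 * (u i)^2 * sq k z"
        unfolding sq_def by (simp add: sum_distrib_left mult.assoc)
    qed simp
    also have "\<dots> = t^2 * sq n u * sq k z"
    proof -
      have "\<And>c. (\<Sum>i<n. t^2 * (u i)^2 * c) = t^2 * (\<Sum>i<n. (u i)^2) * c"
        by (simp add: sum_distrib_left sum_distrib_right mult.assoc)
      then show ?thesis unfolding sq_def[of n u] by blast
    qed
    finally show ?thesis .
  qed
  have meas[measurable]: "(\<lambda>B. bil n k B u z) \<in> borel_measurable ?M" by (rule bil_meas)
  have seteq: "{B \<in> space ?M. K \<le> bil n k B u z}
      = {B \<in> space ?M. 1 \<le> ennreal (exp (- t * K)) * ennreal (exp (\<Sum>ij\<in>?I. a ij * B ij))}"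
  proof (intro Collect_cong conj_cong refl)
    fix B
    have "ennreal (exp (- t * K)) * ennreal (exp (\<Sum>ij\<in>?I. a ij * B ij))
        = ennreal (exp (t * bil n k B u z - t * K))"
      by (simp add: X[symmetric] ennreal_mult[symmetric] exp_add[symmetric])
    moreover have "(1 \<le> exp (t * bil n k B u z - t * K)) \<longleftrightarrow> (K \<le> bil n k B u z)"
      using t by (simp add: one_le_exp_iff)
    ultimately show "(K \<le> bil n k B u z) = (1 \<le> ennreal (exp (- t * K)) * ennreal (exp (\<Sum>ij\<in>?I. a ij * B ij)))"
      by simp
  qed
  have "emeasure ?M {B \<in> space ?M. K \<le> bil n k B u z}
      \<le> ennreal (exp (- t * K)) * (\<integral>\<^sup>+ B. ennreal (exp (\<Sum>ij\<in>?I. a ij * B ij)) * indicator (space ?M) B \<partial>?M)"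
    unfolding seteq
  proof (rule nn_integral_Markov_inequality)
    have "(\<lambda>B. \<Sum>ij\<in>?I. a ij * B ij) \<in> borel_measurable ?M"
      by (intro borel_measurable_sum borel_measurable_times borel_measurable_const) (auto intro!: gm_comp)
    then show "(\<lambda>B. ennreal (exp (\<Sum>ij\<in>?I. a ij * B ij)) * indicator (space ?M) B) \<in> borel_measurable ?M"
      by measurable
  qed simp
  also have "(\<integral>\<^sup>+ B. ennreal (exp (\<Sum>ij\<in>?I. a ij * B ij)) * indicator (space ?M) B \<partial>?M)
      = (\<integral>\<^sup>+ B. ennreal (exp (\<Sum>ij\<in>?I. a ij * B ij)) \<partial>?M)"
    by (intro nn_integral_cong) auto
  also have "\<dots> = ennreal (exp ((\<Sum>ij\<in>?I. (a ij)^2)/2))" by (rule gm_mgf)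
  also have "ennreal (exp (- t * K)) * \<dots> = ennreal (exp (t^2 * sq n u * sq k z / 2 - t * K))"
    by (simp add: sa ennreal_mult[symmetric] exp_add[symmetric])
  finally show ?thesis
    by (simp add: emeasure_eq_measure)
qed

lemma bad_bound:
  assumes n: "1 \<le> n" and k: "1 \<le> k" and kn: "k \<le> n"
  defines "Ebad \<equiv> (\<Union>uz\<in>net n \<times> net k. {B \<in> space (gauss_matrix n k). 85 * sqrt (real n) \<le> bil n k B (fst uz) (snd uz)})"
  shows "Ebad \<in> sets (gauss_matrix n k) \<and> measure (gauss_matrix n k) Ebad \<le> exp (- real n)"
proof -
  let ?M = "gauss_matrix n k"
  let ?K = "85 * sqrt (real n)"
  have [measurable]: "(\<lambda>B. bil n k B u z) \<in> borel_measurable ?M" for u z by (rule bil_meas)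
  have ev: "{B \<in> space ?M. ?K \<le> bil n k B (fst uz) (snd uz)} \<in> sets ?M" for uz by measurable
  have fin: "finite (net n \<times> net k)" using finite_net by auto
  have each: "measure ?M {B \<in> space ?M. ?K \<le> bil n k B (fst uz) (snd uz)} \<le> exp (- 77 * real n)"
    if "uz \<in> net n \<times> net k" for uz
  proof -
    have su: "sq n (fst uz) \<le> 4" "sq k (snd uz) \<le> 4" using that net_sq n k by auto
    have s0: "0 \<le> sq n (fst uz)" "0 \<le> sq k (snd uz)" unfolding sq_def by (simp_all add: sum_nonneg)
    have "sq n (fst uz) * sq k (snd uz) \<le> 4 * 4" using su s0 by (intro mult_mono) auto
    then have P: "real n * (sq n (fst uz) * sq k (snd uz)) \<le> real n * 16" by (intro mult_left_mono) auto
    have e1: "(sqrt (real n))^2 = real n" by simp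
    have e2: "sqrt (real n) * ?K = 85 * real n" by (simp add: mult.left_commute)
    have "(sqrt (real n))^2 * sq n (fst uz) * sq k (snd uz) / 2 - sqrt (real n) * ?K
        = real n * (sq n (fst uz) * sq k (snd uz)) / 2 - 85 * real n"
      by (simp only: e1 e2 mult.assoc)
    then have "(sqrt (real n))^2 * sq n (fst uz) * sq k (snd uz) / 2 - sqrt (real n) * ?K \<le> - 77 * real n"
      using P by linarith
    moreover have "measure ?M {B \<in> space ?M. ?K \<le> bil n k B (fst uz) (snd uz)}
        \<le> exp ((sqrt (real n))^2 * sq n (fst uz) * sq k (snd uz) / 2 - sqrt (real n) * ?K)"
      by (rule chernoff) (use n in simp)
    ultimately show ?thesis by (meson exp_le_cancel_iff order_trans)
  qed
  have "measure ?M Ebad \<le> (\<Sum>uz\<in>net n \<times> net k. measure ?M {B \<in> space ?M. ?K \<le> bil n k B (fst uz) (snd uz)})"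
    unfolding Ebad_def by (rule measure_UNION_le[OF fin ev])
  also have "\<dots> \<le> real (card (net n \<times> net k)) * exp (- 77 * real n)"
    using each by (rule sum_bounded_above)
  also have "\<dots> \<le> (exp (38 * real n) * exp (38 * real k)) * exp (- 77 * real n)"
  proof (rule mult_right_mono)
    show "real (card (net n \<times> net k)) \<le> exp (38 * real n) * exp (38 * real k)"
      using card_net[of n] card_net[of k] by (simp add: card_cartesian_product mult_mono)
  qed simp
  also have "\<dots> \<le> exp (- real n)"
    using kn by (simp add: exp_add[symmetric])
  finally show ?thesis unfolding Ebad_def using ev fin by (auto intro!: sets.finite_UN)
qed

lemma pw:
  assumes eta: "1 \<le> eta" and p: "0 < p" "p \<le> 1"
  shows "\<bar>y::real\<bar> powr p \<le> eta + y^2 / eta"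
proof -
  have t: "0 \<le> y^2 / eta" using eta by simp
  show ?thesis
  proof (cases "\<bar>y\<bar> \<le> 1")
    case True
    then have "\<bar>y\<bar> powr p \<le> 1 powr p" using p by (intro powr_mono2) auto
    then have "\<bar>y\<bar> powr p \<le> 1" by simp
    then show ?thesis using eta t by linarith
  next
    case False
    then have "\<bar>y\<bar> powr p \<le> \<bar>y\<bar> powr 1" using p by (intro powr_mono) auto
    then have a: "\<bar>y\<bar> powr p \<le> \<bar>y\<bar>" using False by simp
    show ?thesis
    proof (cases "\<bar>y\<bar> \<le> eta")
      case True then show ?thesis using a t by linarith
    next
      case False
      then have "eta * \<bar>y\<bar> \<le> \<bar>y\<bar> * \<bar>y\<bar>" by (intro mult_right_mono) auto
      then have "\<bar>y\<bar> \<le> y^2 / eta" using eta by (simp add: field_simps power2_eq_square)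
      then show ?thesis using a eta by linarith
    qed
  qed
qed

lemma good_incl:
  assumes n: "1 \<le> n" and k: "1 \<le> k" and p: "0 < p" "p \<le> 1" and lam: "0 < lam"
    and eta_def: "eta = 231200 / lam + 1" and rho_def: "rho = lam / (8 * eta)"
    and B: "B \<in> space (gauss_matrix n k)"
    and nb: "B \<notin> (\<Union>uz\<in>net n \<times> net k. {B \<in> space (gauss_matrix n k). 85 * sqrt (real n) \<le> bil n k B (fst uz) (snd uz)})"
    and z: "sq k z = 1" and T: "T \<subseteq> {..<n}" and cT: "real (card T) \<le> rho * real n"
  shows "phi B k T p z < lam * real n / 2"
proof -
  define K where "K = 85 * sqrt (real n)"
  have eta1: "1 \<le> eta" using lam unfolding eta_def by simp
  have H: "\<forall>u\<in>net n. \<forall>z\<in>net k. bil n k B u z \<le> K"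
    using nb B unfolding K_def by force
  have B2: "\<forall>u z. sq n u \<le> 1 \<longrightarrow> sq k z \<le> 1 \<longrightarrow> bil n k B u z \<le> 2 * K"
    using op_bound[OF n k H] by blast
  have R: "(\<Sum>i<n. (\<Sum>j<k. B(i,j) * z j)^2) \<le> (2*K)^2"
    by (rule row_bound[OF B2]) (use z in simp)
  have K2: "(2*K)^2 = 28900 * real n" unfolding K_def by (simp add: power_mult_distrib)
  define y where "y = (\<lambda>i. \<Sum>j<k. B(i,j) * z j)"
  have s1: "phi B k T p z \<le> real (card T) * eta + (\<Sum>i\<in>T. (y i)^2) / eta"
  proof -
    have "phi B k T p z = (\<Sum>i\<in>T. \<bar>y i\<bar> powr p)" unfolding phi_def y_def ..
    also have "\<dots> \<le> (\<Sum>i\<in>T. eta + (y i)^2 / eta)"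
      by (intro sum_mono pw[OF eta1 p])
    also have "\<dots> = real (card T) * eta + (\<Sum>i\<in>T. (y i)^2) / eta"
      by (simp add: sum.distrib sum_divide_distrib)
    finally show ?thesis .
  qed
  have s2: "(\<Sum>i\<in>T. (y i)^2) \<le> 28900 * real n"
  proof -
    have "(\<Sum>i\<in>T. (y i)^2) \<le> (\<Sum>i<n. (y i)^2)"
      by (rule sum_mono2[OF _ T]) auto
    also have "\<dots> \<le> 28900 * real n" using R K2 unfolding y_def by simp
    finally show ?thesis .
  qed
  have s3: "(\<Sum>i\<in>T. (y i)^2) / eta \<le> 28900 * real n / eta"
    using s2 eta1 by (intro divide_right_mono) auto
  have s4: "real (card T) * eta \<le> lam * real n / 8"
  proof -
    have "real (card T) * eta \<le> rho * real n * eta" using cT eta1 by (intro mult_right_mono) auto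
    also have "rho * real n * eta = lam * real n / 8" unfolding rho_def using eta1 by simp
    finally show ?thesis .
  qed
  have s5: "28900 * real n / eta \<le> lam * real n / 8"
  proof -
    have "231200 / lam \<le> eta" unfolding eta_def by simp
    then have "231200 \<le> eta * lam" using lam by (simp add: field_simps)
    then have "231200 * real n \<le> (eta * lam) * real n" by (intro mult_right_mono) auto
    then have "28900 * real n * 8 \<le> lam * real n * eta" by (simp add: algebra_simps)
    then show ?thesis using eta1 by (simp add: field_simps)
  qed
  have "0 < lam * real n" using lam n by simp
  then show ?thesis using s1 s3 s4 s5 by linarith
qed


theorem lemma6:
  fixes \<alpha> p lam :: real
  assumes "0 < \<alpha>" "\<alpha> < 1" "0 < p" "p \<le> 1" "0 < lam"
  shows "\<exists>\<rho> > 0. \<exists>c > 0. \<exists>N. \<forall>n \<ge> N.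
    (let m = nat \<lfloor>\<alpha> * real n\<rfloor> in
      measure (gauss_matrix n (n - m))
        {B \<in> space (gauss_matrix n (n - m)).
           \<forall>z :: nat \<Rightarrow> real. (\<Sum>j<n - m. (z j)\<^sup>2) = 1 \<longrightarrow>
             (\<forall>T \<subseteq> {..<n}. real (card T) \<le> \<rho> * real n \<longrightarrow>
                (\<Sum>i\<in>T. \<bar>\<Sum>j<n - m. B (i, j) * z j\<bar> powr p) < lam * real n / 2)}
      \<ge> 1 - exp (- c * real n))"
proof -
  note a = assms
  define eta where "eta = 231200 / lam + 1"
  define rho where "rho = lam / (8 * eta)"
  have eta1: "1 \<le> eta" using a(5) unfolding eta_def by simp
  have rho0: "rho > 0" unfolding rho_def using eta1 a(5) by simp
  have main: "measure (gauss_matrix n k)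
        {B \<in> space (gauss_matrix n k). \<forall>z. sq k z = 1 \<longrightarrow>
           (\<forall>T \<subseteq> {..<n}. real (card T) \<le> rho * real n \<longrightarrow> phi B k T p z < lam * real n / 2)}
      \<ge> 1 - exp (- 1 * real n)"
    if n: "1 \<le> n" and k: "1 \<le> k" and kn: "k \<le> n" for n k
  proof -
    let ?M = "gauss_matrix n k"
    interpret prob_space ?M by (rule gm_prob)
    define Ebad where "Ebad = (\<Union>uz\<in>net n \<times> net k. {B \<in> space (gauss_matrix n k). 85 * sqrt (real n) \<le> bil n k B (fst uz) (snd uz)})"
    have EB: "Ebad \<in> sets ?M" "measure ?M Ebad \<le> exp (- real n)"
      using bad_bound[OF n k kn] unfolding Ebad_def by auto
    define G where "G = {B \<in> space ?M. \<forall>z. sq k z = 1 \<longrightarrow>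
           (\<forall>T \<subseteq> {..<n}. real (card T) \<le> rho * real n \<longrightarrow> phi B k T p z < lam * real n / 2)}"
    define TT where "TT = {T. T \<subseteq> {..<n} \<and> real (card T) \<le> rho * real n}"
    define GT where "GT = (\<lambda>T. {B \<in> space ?M. \<forall>z. sq k z = 1 \<longrightarrow> phi B k T p z < lam * real n / 2})"
    have finTT: "finite TT" unfolding TT_def by (rule finite_subset[of _ "Pow {..<n}"]) auto
    have "{} \<in> TT" unfolding TT_def using rho0 by auto
    then have neTT: "TT \<noteq> {}" by blast
    have "G = space ?M \<inter> (\<Inter>T\<in>TT. GT T)" unfolding G_def GT_def TT_def by auto
    moreover have "(\<Inter>T\<in>TT. GT T) \<in> sets ?M"
      by (rule sets.finite_INT[OF finTT neTT]) (unfold GT_def TT_def, rule good_meas[OF a(3) k], blast)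
    ultimately have Gm: "G \<in> sets ?M" by auto
    have incl: "space ?M - Ebad \<subseteq> G"
    proof
      fix B assume B: "B \<in> space ?M - Ebad"
      show "B \<in> G" unfolding G_def
        using B good_incl[OF n k a(3) a(4) a(5) eta_def rho_def] unfolding Ebad_def by blast
    qed
    have "1 - exp (- 1 * real n) \<le> 1 - measure ?M Ebad" using EB by simp
    also have "\<dots> = measure ?M (space ?M - Ebad)" using prob_compl[OF EB(1)] by simp
    also have "\<dots> \<le> measure ?M G" using incl Gm by (intro finite_measure_mono) auto
    finally show ?thesis unfolding G_def .
  qed
  have fin: "\<forall>n \<ge> (1::nat). (let m = nat \<lfloor>\<alpha> * real n\<rfloor> in
      measure (gauss_matrix n (n - m))
        {B \<in> space (gauss_matrix n (n - m)).
           \<forall>z :: nat \<Rightarrow> real. (\<Sum>j<n - m. (z j)\<^sup>2) = 1 \<longrightarrow>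
             (\<forall>T \<subseteq> {..<n}. real (card T) \<le> rho * real n \<longrightarrow>
                (\<Sum>i\<in>T. \<bar>\<Sum>j<n - m. B (i, j) * z j\<bar> powr p) < lam * real n / 2)}
      \<ge> 1 - exp (- 1 * real n))"
  proof (intro allI impI)
    fix n :: nat assume n: "1 \<le> n"
    define m where "m = nat \<lfloor>\<alpha> * real n\<rfloor>"
    have "\<lfloor>\<alpha> * real n\<rfloor> < int n"
    proof -
      have "\<alpha> * real n < real n" using a(2) n by simp
      then show ?thesis by linarith
    qed
    then have mn: "m < n" unfolding m_def using n
      by (cases "0 \<le> \<lfloor>\<alpha> * real n\<rfloor>") (auto simp: nat_less_iff)
    have "measure (gauss_matrix n (n - m))
        {B \<in> space (gauss_matrix n (n - m)). \<forall>z. sq (n - m) z = 1 \<longrightarrow>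
           (\<forall>T \<subseteq> {..<n}. real (card T) \<le> rho * real n \<longrightarrow> phi B (n - m) T p z < lam * real n / 2)}
      \<ge> 1 - exp (- 1 * real n)"
      by (rule main) (use n mn in auto)
    note X = this[unfolded sq_def phi_def]
    show "let m = nat \<lfloor>\<alpha> * real n\<rfloor> in
      measure (gauss_matrix n (n - m))
        {B \<in> space (gauss_matrix n (n - m)).
           \<forall>z :: nat \<Rightarrow> real. (\<Sum>j<n - m. (z j)\<^sup>2) = 1 \<longrightarrow>
             (\<forall>T \<subseteq> {..<n}. real (card T) \<le> rho * real n \<longrightarrow>
                (\<Sum>i\<in>T. \<bar>\<Sum>j<n - m. B (i, j) * z j\<bar> powr p) < lam * real n / 2)}
      \<ge> 1 - exp (- 1 * real n)"
      unfolding Let_def m_def[symmetric] by (rule X)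
  qed
  show ?thesis
    by (rule exI[of _ rho], rule conjI[OF rho0], rule exI[of _ 1], rule conjI[OF zero_less_one],
        rule exI[of _ 1], rule fin)
qed

end
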